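(* For any integer $n\geq 4$, we have $\chi(\overline{K}(n,2))\leq h_o(\overline{K}(n,2))$, and $\overline{K}(n,2)$ contains a strongly $1$-shallow $K_t$-minor, where $t=n-1=\chi(\overline{K}(n,2))$ when $n$ is even and $t=n=\chi(\overline{K}(n,2))$ when $n$ is odd.
   Context: $\overline{K}(n,k)$ is the complement of the Kneser graph: its vertices are the $k$-element subsets of $[n]=\{1,\dots,n\}$, two distinct ones adjacent iff they intersect. $\chi$ is chromatic number. A $K_t$-minor of a graph $G$ is given by $t$ pairwise vertex-disjoint connected subgraphs (bags), any two joined by an edge of $G$. A star is $K_{1,s}$, $s\ge1$. A $K_t$-minor is strongly $1$-shallow if each bag is a single vertex or a star, and every two bags are joined by an edge each of whose endpoints is either the unique vertex of a single-vertex bag or a leaf of a star bag. Signed graphs: $(G,\sigma)$ with $\sigma:E(G)\to\{+,-\}$; switching at $x$ flips signs of edges at $x$. $(H,\pi)$ is a minor of $(G,\sigma)$ if for some $\tau$ switching equivalent to $\sigma$ there are disjoint subgraphs $B_x$ ($x\in V(H)$) whose $\tau$-positive edges span each $B_x$ connectedly, and for each edge $xy$ of $H$ an edge $uv$ with $u\in B_x,v\in B_y$ and $\tau(uv)=\pi(xy)$. $h_o(G)$ is the largest $t$ such that $(K_t,-)$ (all edges negative) is a minor of $(G,-)$. *)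

theory Defs
  imports Main
begin

text \<open>Simple graphs are given by a vertex set V and a symmetric irreflexive
adjacency predicate E (only its restriction to V matters).\<close>

definition conn_set :: "'a set \<Rightarrow> ('a \<Rightarrow> 'a \<Rightarrow> bool) \<Rightarrow> bool" where
  "conn_set C R \<longleftrightarrow> C \<noteq> {} \<and>
     (\<forall>u\<in>C. \<forall>v\<in>C. rtranclp (\<lambda>a b. a \<in> C \<and> b \<in> C \<and> R a b) u v)"

definition proper_colouring :: "'a set \<Rightarrow> ('a \<Rightarrow> 'a \<Rightarrow> bool) \<Rightarrow> nat \<Rightarrow> ('a \<Rightarrow> nat) \<Rightarrow> bool" where
  "proper_colouring V E k c \<longleftrightarrow>
     (\<forall>v\<in>V. c v < k) \<and> (\<forall>u\<in>V. \<forall>v\<in>V. E u v \<longrightarrow> c u \<noteq> c v)"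

definition chromatic_number :: "'a set \<Rightarrow> ('a \<Rightarrow> 'a \<Rightarrow> bool) \<Rightarrow> nat" where
  "chromatic_number V E = (LEAST k. \<exists>c. proper_colouring V E k c)"

text \<open>Complement of the Kneser graph: k-subsets of {1..n}, adjacent iff distinct and intersecting.\<close>

definition KC_V :: "nat \<Rightarrow> nat \<Rightarrow> nat set set" where
  "KC_V n k = {A. A \<subseteq> {1..n} \<and> card A = k}"

definition KC_E :: "nat set \<Rightarrow> nat set \<Rightarrow> bool" where
  "KC_E A B \<longleftrightarrow> A \<noteq> B \<and> A \<inter> B \<noteq> {}"

text \<open>Signed graphs: signatures are predicates on pairs, True = positive edge, False = negative.
Switching at a set S of vertices flips the sign of every edge with exactly one end in S.\<close>

definition switching_equiv :: "'a set \<Rightarrow> ('a \<Rightarrow> 'a \<Rightarrow> bool) \<Rightarrow> ('a \<Rightarrow> 'a \<Rightarrow> bool) \<Rightarrow> bool" where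
  "switching_equiv V sigma tau \<longleftrightarrow> (\<exists>S\<subseteq>V. \<forall>u\<in>V. \<forall>v\<in>V.
     tau u v = (if (u \<in> S) = (v \<in> S) then sigma u v else \<not> sigma u v))"

definition signed_minor ::
  "'a set \<Rightarrow> ('a \<Rightarrow> 'a \<Rightarrow> bool) \<Rightarrow> ('a \<Rightarrow> 'a \<Rightarrow> bool) \<Rightarrow>
   'b set \<Rightarrow> ('b \<Rightarrow> 'b \<Rightarrow> bool) \<Rightarrow> ('b \<Rightarrow> 'b \<Rightarrow> bool) \<Rightarrow> bool" where
  "signed_minor V E sigma W F pi \<longleftrightarrow>
     (\<exists>tau B. switching_equiv V sigma tau \<and>
        (\<forall>x\<in>W. B x \<subseteq> V \<and> conn_set (B x) (\<lambda>u v. E u v \<and> tau u v)) \<and>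
        (\<forall>x\<in>W. \<forall>y\<in>W. x \<noteq> y \<longrightarrow> B x \<inter> B y = {}) \<and>
        (\<forall>x\<in>W. \<forall>y\<in>W. F x y \<longrightarrow> (\<exists>u\<in>B x. \<exists>v\<in>B y. E u v \<and> tau u v = pi x y)))"

definition h_o :: "'a set \<Rightarrow> ('a \<Rightarrow> 'a \<Rightarrow> bool) \<Rightarrow> nat" where
  "h_o V E = (GREATEST t. signed_minor V E (\<lambda>_ _. False)
                 {..<t} (\<lambda>i j. i \<noteq> j) (\<lambda>_ _. False))"

text \<open>Bag i has centre c i and leaf set L i:
if L i is empty the bag is the single vertex c i, otherwise it is the star with
centre c i and leaves L i.\<close>

definition ports :: "('b \<Rightarrow> 'a) \<Rightarrow> ('b \<Rightarrow> 'a set) \<Rightarrow> 'b \<Rightarrow> 'a set" where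
  "ports c L i = (if L i = {} then {c i} else L i)"

definition strongly_1_shallow_minor :: "'a set \<Rightarrow> ('a \<Rightarrow> 'a \<Rightarrow> bool) \<Rightarrow> nat \<Rightarrow> bool" where
  "strongly_1_shallow_minor V E t \<longleftrightarrow>
     (\<exists>c L. (\<forall>i<t. c i \<in> V \<and> L i \<subseteq> V \<and> c i \<notin> L i \<and> (\<forall>l\<in>L i. E (c i) l)) \<and>
        (\<forall>i<t. \<forall>j<t. i \<noteq> j \<longrightarrow> insert (c i) (L i) \<inter> insert (c j) (L j) = {}) \<and>
        (\<forall>i<t. \<forall>j<t. i \<noteq> j \<longrightarrow> (\<exists>u\<in>ports c L i. \<exists>v\<in>ports c L j. E u v)))"

end

theory Submission
  imports Defs
begin

lemma finite_KC: "finite (KC_V n k)"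
  unfolding KC_V_def by (rule finite_subset[of _ "Pow {1..n}"]) auto

lemma card_KC: "card (KC_V n 2) = n choose 2"
  unfolding KC_V_def using n_subsets[of "{1..n}" 2] by simp

lemma class_bound:
  assumes "proper_colouring (KC_V n 2) KC_E k f"
  shows "card {A \<in> KC_V n 2. f A = c} * 2 \<le> n"
proof -
  let ?C = "{A \<in> KC_V n 2. f A = c}"
  have fin: "finite ?C" using finite_KC by auto
  have pd: "pairwise disjnt ?C"
    unfolding pairwise_def disjnt_def
  proof (intro ballI impI)
    fix A B assume "A \<in> ?C" "B \<in> ?C" "A \<noteq> B"
    then show "A \<inter> B = {}" using assms unfolding proper_colouring_def KC_E_def by auto
  qed
  have "card (\<Union>?C) = sum card ?C"
    by (rule card_Union_disjoint[OF pd]) (auto simp: KC_V_def intro: finite_subset)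
  also have "\<dots> = sum (\<lambda>_. 2) ?C" by (rule sum.cong) (auto simp: KC_V_def)
  also have "\<dots> = card ?C * 2" by simp
  finally have "card ?C * 2 = card (\<Union>?C)" by simp
  also have "\<dots> \<le> card {1..n}" by (rule card_mono) (auto simp: KC_V_def)
  finally show ?thesis by simp
qed

lemma colour_lower:
  assumes "proper_colouring (KC_V n 2) KC_E k f"
  shows "n choose 2 \<le> k * (n div 2)"
proof -
  have "KC_V n 2 = (\<Union>c\<in>{..<k}. {A \<in> KC_V n 2. f A = c})"
    using assms unfolding proper_colouring_def by auto
  then have "card (KC_V n 2) \<le> (\<Sum>c\<in>{..<k}. card {A \<in> KC_V n 2. f A = c})"
    using card_UN_le[of "{..<k}" "\<lambda>c. {A \<in> KC_V n 2. f A = c}"] by simp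
  also have "\<dots> \<le> (\<Sum>c\<in>{..<k}. n div 2)"
    apply (rule sum_mono) using class_bound[OF assms] by (metis div_le_mono nonzero_mult_div_cancel_right zero_neq_numeral)
  finally show ?thesis using card_KC by simp
qed

lemma colour_lower2:
  assumes "proper_colouring (KC_V n 2) KC_E k f" "n \<ge> 4"
  shows "(if even n then n - 1 else n) \<le> k"
proof (cases "even n")
  case True
  then obtain m where m: "n = 2*m" by auto
  have "n choose 2 = m * (2*m - 1)" unfolding choose_two m
    by (cases m) (auto simp: algebra_simps)
  moreover have "n div 2 = m" using m by simp
  ultimately have "m * (2*m-1) \<le> m * k" using colour_lower[OF assms(1)] by (simp add: mult.commute)
  moreover have "m > 0" using m assms(2) by simp
  ultimately have "2*m - 1 \<le> k" using mult_le_cancel1[of m "2*m-1" k] by simp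
  then show ?thesis using True m by simp
next
  case False
  then obtain m where m: "n = 2*m+1" using oddE by blast
  have "n choose 2 = m * (2*m + 1)" unfolding choose_two m
    by (simp add: algebra_simps)
  moreover have "n div 2 = m" using m by simp
  ultimately have "m * (2*m+1) \<le> m * k" using colour_lower[OF assms(1)] by (simp add: mult.commute)
  moreover have "m > 0" using m assms(2) by simp
  ultimately have "2*m + 1 \<le> k" using mult_le_cancel1[of m "2*m+1" k] by simp
  then show ?thesis using False m by simp
qed

lemma l1: "(a + x) mod (m::nat) = (a + y) mod m \<Longrightarrow> x mod m = y mod m"
  by (simp add: nat_mod_eq_iff)
lemma l2: assumes "odd (m::nat)" "(2*x) mod m = (2*y) mod m" shows "x mod m = y mod m"
proof -
  have "int m dvd (int x - int y) * 2"
    using assms(2) by (metis mod_eq_dvd_iff mult.commute of_nat_mult of_nat_numeral right_diff_distrib' zmod_int)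
  moreover have "coprime (int m) 2" using assms(1) by simp
  ultimately have "int m dvd (int x - int y)" using coprime_dvd_mult_left_iff by blast
  then show ?thesis by (metis mod_eq_dvd_iff of_nat_eq_iff zmod_int)
qed
lemma l3: "x \<in> {1..m} \<Longrightarrow> y \<in> {1..(m::nat)} \<Longrightarrow> x mod m = y mod m \<Longrightarrow> x = y"
  by (metis atLeastAtMost_iff dvd_eq_mod_eq_0 dvd_refl le_eq_less_or_eq mod_if not_one_le_zero)

lemma two_elem:
  assumes "card A = 2" "x \<in> A" obtains y where "A = {x,y}" "x \<noteq> y"
proof -
  obtain a b where ab: "A = {a,b}" "a \<noteq> b" using card_2_iff[THEN iffD1, OF assms(1)] by blast
  from assms(2) ab have "x = a \<or> x = b" by simp
  then show ?thesis
  proof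
    assume "x = a" then show ?thesis using that[of b] ab by simp
  next
    assume "x = b" then show ?thesis using that[of a] ab by (simp add: insert_commute)
  qed
qed

lemma pair_share:
  assumes "A \<in> KC_V n 2" "B \<in> KC_V n 2" "KC_E A B"
  obtains x y z where "A = {x,y}" "B = {x,z}" "x \<noteq> y" "x \<noteq> z" "y \<noteq> z"
    "x \<in> {1..n}" "y \<in> {1..n}" "z \<in> {1..n}"
proof -
  obtain x where x: "x \<in> A" "x \<in> B" using assms(3) unfolding KC_E_def by auto
  obtain y where y: "A = {x,y}" "x \<noteq> y" using two_elem[of A x] assms(1) x unfolding KC_V_def by auto
  obtain z where z: "B = {x,z}" "x \<noteq> z" using two_elem[of B x] assms(2) x unfolding KC_V_def by auto
  have "y \<noteq> z" using assms(3) y z unfolding KC_E_def by auto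
  then show ?thesis
    by (rule that[OF y(1) z(1) y(2) z(2)]) (use x y z assms(1,2) in \<open>auto simp: KC_V_def\<close>)
qed

definition col :: "nat \<Rightarrow> nat set \<Rightarrow> nat" where
  "col n A = (if even n then (if n \<in> A then 2*(\<Sum>A - n) else \<Sum>A) mod (n-1) else (\<Sum>A) mod n)"

lemma col_pair: "x \<noteq> y \<Longrightarrow> col n {x,y} =
  (if even n then (if x = n then 2*y else if y = n then 2*x else x+y) mod (n-1) else (x+y) mod n)"
  unfolding col_def by auto

lemma col_proper:
  assumes "n \<ge> 4"
  shows "proper_colouring (KC_V n 2) KC_E (if even n then n - 1 else n) (col n)"
  unfolding proper_colouring_def
proof (intro conjI ballI impI)
  fix v assume "v \<in> KC_V n 2"
  show "col n v < (if even n then n - 1 else n)" using assms unfolding col_def by auto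
next
  fix A B assume AB: "A \<in> KC_V n 2" "B \<in> KC_V n 2" "KC_E A B"
  obtain x y z where xyz: "A = {x,y}" "B = {x,z}" "x \<noteq> y" "x \<noteq> z" "y \<noteq> z"
    "x \<in> {1..n}" "y \<in> {1..n}" "z \<in> {1..n}" using pair_share[OF AB] by blast
  show "col n A \<noteq> col n B"
  proof (cases "even n")
    case False
    have "(x+y) mod n \<noteq> (x+z) mod n" using l1[of x y n z] l3[of y n z] xyz by auto
    then show ?thesis using xyz col_pair False by simp
  next
    case True
    define m where "m = n - 1"
    have om: "odd m" using True assms m_def by simp
    have mem: "w \<in> {1..m}" if "w \<in> {1..n}" "w \<noteq> n" for w using that m_def by auto
    have c: "col n {x,w} = (if x = n then 2*w else if w = n then 2*x else x+w) mod m" if "x \<noteq> w" for w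
      using col_pair[OF that, of n] True m_def by simp
    have "(if x = n then 2*y else if y = n then 2*x else x+y) mod m \<noteq>
          (if x = n then 2*z else if z = n then 2*x else x+z) mod m"
    proof (cases "x = n")
      case True
      then show ?thesis using l2[OF om, of y z] l3[of y m z] mem xyz by auto
    next
      case xn: False
      show ?thesis
      proof (cases "y = n")
        case True
        then have "z \<noteq> n" using xyz by auto
        then show ?thesis using xn True l1[of x x m z] l3[of x m z] mem xyz by (auto simp: mult_2)
      next
        case yn: False
        show ?thesis
        proof (cases "z = n")
          case True
          then show ?thesis using xn yn l1[of x x m y] l3[of x m y] mem xyz by (auto simp: mult_2)
        next
          case False
          then show ?thesis using xn yn l1[of x y m z] l3[of y m z] mem xyz by auto
        qed
      qed
    qed
    then show ?thesis using c xyz by simp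
  qed
qed

lemma shallow_mono: "strongly_1_shallow_minor V E t \<Longrightarrow> s \<le> t \<Longrightarrow> strongly_1_shallow_minor V E s"
  unfolding strongly_1_shallow_minor_def
proof (elim exE conjE)
  fix c L
  assume a: "\<forall>i<t. c i \<in> V \<and> L i \<subseteq> V \<and> c i \<notin> L i \<and> (\<forall>l\<in>L i. E (c i) l)"
    "\<forall>i<t. \<forall>j<t. i \<noteq> j \<longrightarrow> insert (c i) (L i) \<inter> insert (c j) (L j) = {}"
    "\<forall>i<t. \<forall>j<t. i \<noteq> j \<longrightarrow> (\<exists>u\<in>ports c L i. \<exists>v\<in>ports c L j. E u v)"
    and st: "s \<le> t"
  have lt: "i < s \<Longrightarrow> i < t" for i using st by simp
  have b1: "\<forall>i<s. c i \<in> V \<and> L i \<subseteq> V \<and> c i \<notin> L i \<and> (\<forall>l\<in>L i. E (c i) l)"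
    using a(1) lt by simp
  have b2: "\<forall>i<s. \<forall>j<s. i \<noteq> j \<longrightarrow> insert (c i) (L i) \<inter> insert (c j) (L j) = {}"
    using a(2) lt by simp
  have b3: "\<forall>i<s. \<forall>j<s. i \<noteq> j \<longrightarrow> (\<exists>u\<in>ports c L i. \<exists>v\<in>ports c L j. E u v)"
    using a(3) lt by simp
  show "\<exists>c L. (\<forall>i<s. c i \<in> V \<and> L i \<subseteq> V \<and> c i \<notin> L i \<and> (\<forall>l\<in>L i. E (c i) l)) \<and>
        (\<forall>i<s. \<forall>j<s. i \<noteq> j \<longrightarrow> insert (c i) (L i) \<inter> insert (c j) (L j) = {}) \<and>
        (\<forall>i<s. \<forall>j<s. i \<noteq> j \<longrightarrow> (\<exists>u\<in>ports c L i. \<exists>v\<in>ports c L j. E u v))"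
    using b1 b2 b3 by blast
qed

lemma shallow_signed:
  assumes sh: "strongly_1_shallow_minor V E t" and sym: "\<And>u v. E u v \<Longrightarrow> E v u"
  shows "signed_minor V E (\<lambda>_ _. False) {..<t} (\<lambda>i j. i \<noteq> j) (\<lambda>_ _. False)"
proof -
  obtain c L where cV: "\<And>i. i<t \<Longrightarrow> c i \<in> V \<and> L i \<subseteq> V \<and> c i \<notin> L i \<and> (\<forall>l\<in>L i. E (c i) l)"
    and dj: "\<And>i j. i<t \<Longrightarrow> j<t \<Longrightarrow> i \<noteq> j \<Longrightarrow> insert (c i) (L i) \<inter> insert (c j) (L j) = {}"
    and adj: "\<And>i j. i<t \<Longrightarrow> j<t \<Longrightarrow> i \<noteq> j \<Longrightarrow> (\<exists>u\<in>ports c L i. \<exists>v\<in>ports c L j. E u v)"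
  proof -
    obtain c L where H: "(\<forall>i<t. c i \<in> V \<and> L i \<subseteq> V \<and> c i \<notin> L i \<and> (\<forall>l\<in>L i. E (c i) l)) \<and>
        (\<forall>i<t. \<forall>j<t. i \<noteq> j \<longrightarrow> insert (c i) (L i) \<inter> insert (c j) (L j) = {}) \<and>
        (\<forall>i<t. \<forall>j<t. i \<noteq> j \<longrightarrow> (\<exists>u\<in>ports c L i. \<exists>v\<in>ports c L j. E u v))"
      using sh unfolding strongly_1_shallow_minor_def by blast
    have h1: "\<forall>i<t. c i \<in> V \<and> L i \<subseteq> V \<and> c i \<notin> L i \<and> (\<forall>l\<in>L i. E (c i) l)"
      using H by (rule conjunct1)
    have h2: "\<forall>i<t. \<forall>j<t. i \<noteq> j \<longrightarrow> insert (c i) (L i) \<inter> insert (c j) (L j) = {}"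
      using H by (metis (no_types))
    have h3: "\<forall>i<t. \<forall>j<t. i \<noteq> j \<longrightarrow> (\<exists>u\<in>ports c L i. \<exists>v\<in>ports c L j. E u v)"
      using H by (metis (no_types))
    show ?thesis
    proof (rule that)
      fix i assume "i < t" then show "c i \<in> V \<and> L i \<subseteq> V \<and> c i \<notin> L i \<and> (\<forall>l\<in>L i. E (c i) l)"
        using h1 by (elim allE impE)
    next
      fix i j assume "i < t" "j < t" "i \<noteq> j"
      then show "insert (c i) (L i) \<inter> insert (c j) (L j) = {}" using h2 by blast
    next
      fix i j assume "i < t" "j < t" "i \<noteq> j"
      then show "\<exists>u\<in>ports c L i. \<exists>v\<in>ports c L j. E u v" using h3 by blast
    qed
  qed
  define S where "S = {c i | i. i < t \<and> L i \<noteq> {}}"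
  define tau where "tau = (\<lambda>u v. (u \<in> S) \<noteq> (v \<in> S))"
  define B where "B = (\<lambda>i. insert (c i) (L i))"
  have SV: "S \<subseteq> V" using cV unfolding S_def by auto
  have cS: "c i \<in> S" if "i < t" "L i \<noteq> {}" for i using that unfolding S_def by auto
  have LS: "l \<notin> S" if "i < t" "l \<in> L i" for i l
  proof
    assume "l \<in> S"
    then obtain j where j: "j < t" "L j \<noteq> {}" "l = c j" unfolding S_def by auto
    show False
    proof (cases "i = j")
      case True then show False using cV[OF that(1)] j that by auto
    next
      case False then show False using dj[OF that(1) j(1) False] j that by auto
    qed
  qed
  have PS: "u \<notin> S" if "i < t" "u \<in> ports c L i" for i u
  proof (cases "L i = {}")
    case True
    then have u: "u = c i" using that unfolding ports_def by auto
    show ?thesis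
    proof
      assume "u \<in> S"
      then obtain j where j: "j < t" "L j \<noteq> {}" "u = c j" unfolding S_def by auto
      then have "i \<noteq> j" using True by auto
      then show False using dj[OF that(1) j(1)] j u by auto
    qed
  next
    case False
    then show ?thesis using that LS unfolding ports_def by auto
  qed
  have PB: "ports c L i \<subseteq> B i" for i unfolding ports_def B_def by auto
  have sw: "switching_equiv V (\<lambda>_ _. False) tau"
    unfolding switching_equiv_def using SV by (intro exI[of _ S]) (auto simp: tau_def)
  have conn: "conn_set (B i) (\<lambda>u v. E u v \<and> tau u v)" if i: "i < t" for i
  proof -
    let ?R = "\<lambda>a b. a \<in> B i \<and> b \<in> B i \<and> E a b \<and> tau a b"
    have toc: "?R\<^sup>*\<^sup>* u (c i)" if "u \<in> B i" for u
    proof (cases "u = c i")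
      case False
      then have u: "u \<in> L i" using that B_def by auto
      then have "L i \<noteq> {}" by auto
      have "E (c i) u" using cV[OF i] u by blast
      then have "E u (c i)" by (rule sym)
      then have "?R u (c i)" using cS[OF i] LS[OF i u] u \<open>L i \<noteq> {}\<close> unfolding B_def tau_def by simp
      then show ?thesis by auto
    qed simp
    have fromc: "?R\<^sup>*\<^sup>* (c i) u" if "u \<in> B i" for u
    proof (cases "u = c i")
      case False
      then have u: "u \<in> L i" using that B_def by auto
      then have "L i \<noteq> {}" by auto
      have "E (c i) u" using cV[OF i] u by blast
      then have "?R (c i) u" using cS[OF i] LS[OF i u] u \<open>L i \<noteq> {}\<close> unfolding B_def tau_def by simp
      then show ?thesis by auto
    qed simp
    have "?R\<^sup>*\<^sup>* u v" if "u \<in> B i" "v \<in> B i" for u v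
      using rtranclp_trans[OF toc[OF that(1)] fromc[OF that(2)]] .
    moreover have "B i \<noteq> {}" unfolding B_def by simp
    ultimately show ?thesis unfolding conn_set_def by blast
  qed
  show ?thesis unfolding signed_minor_def
  proof (intro exI[of _ tau] exI[of _ B] conjI ballI impI)
    show "switching_equiv V (\<lambda>_ _. False) tau" by (rule sw)
  next
    fix x assume "x \<in> {..<t}"
    then show "B x \<subseteq> V" using cV unfolding B_def by auto
  next
    fix x assume "x \<in> {..<t}"
    then show "conn_set (B x) (\<lambda>u v. E u v \<and> tau u v)" using conn by auto
  next
    fix x y assume "x \<in> {..<t}" "y \<in> {..<t}" "x \<noteq> y"
    then show "B x \<inter> B y = {}" using dj unfolding B_def by auto
  next
    fix x y assume xy: "x \<in> {..<t}" "y \<in> {..<t}" "x \<noteq> y"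
    then obtain u v where uv: "u \<in> ports c L x" "v \<in> ports c L y" "E u v" using adj by blast
    then have "tau u v = False" using PS xy unfolding tau_def by auto
    then show "\<exists>u\<in>B x. \<exists>v\<in>B y. E u v \<and> tau u v = False" using uv PB by blast
  qed
qed

lemma signed_bound:
  assumes "finite V" "signed_minor V E sigma {..<t} (\<lambda>i j. i \<noteq> j) pi"
  shows "t \<le> card V"
proof -
  obtain tau B where B: "\<forall>x\<in>{..<t}. B x \<subseteq> V \<and> conn_set (B x) (\<lambda>u v. E u v \<and> tau u v)"
    and dj: "\<forall>x\<in>{..<t}. \<forall>y\<in>{..<t}. x \<noteq> y \<longrightarrow> B x \<inter> B y = {}"
    using assms(2) unfolding signed_minor_def by blast
  define f where "f = (\<lambda>x. SOME u. u \<in> B x)"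
  have f: "f x \<in> B x" if "x < t" for x
  proof -
    have "B x \<noteq> {}" using B that unfolding conn_set_def by auto
    then show ?thesis unfolding f_def by (simp add: some_in_eq)
  qed
  have "inj_on f {..<t}"
    unfolding inj_on_def using f dj by (metis disjoint_iff lessThan_iff)
  moreover have "f ` {..<t} \<subseteq> V" using f B by auto
  ultimately have "card {..<t} \<le> card V" using card_inj_on_le assms(1) by blast
  then show ?thesis by simp
qed

lemma h_o_ge:
  assumes "finite V" "strongly_1_shallow_minor V E t" "\<And>u v. E u v \<Longrightarrow> E v u"
  shows "t \<le> h_o V E"
proof -
  have P: "signed_minor V E (\<lambda>_ _. False) {..<t} (\<lambda>i j. i \<noteq> j) (\<lambda>_ _. False)"
    by (rule shallow_signed[OF assms(2,3)])
  have bnd: "\<And>y. signed_minor V E (\<lambda>_ _. False) {..<y} (\<lambda>i j. i \<noteq> j) (\<lambda>_ _. False) \<Longrightarrow> y \<le> card V"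
    using signed_bound[OF assms(1)] by blast
  show ?thesis unfolding h_o_def
    by (rule Greatest_le_nat[where P = "\<lambda>t. signed_minor V E (\<lambda>_ _. False) {..<t} (\<lambda>i j. i \<noteq> j) (\<lambda>_ _. False)", OF P bnd])
qed

lemma KC_shallow:
  assumes "n \<ge> 4"
  shows "strongly_1_shallow_minor (KC_V n 2) KC_E n"
proof -
  define c where "c = (\<lambda>i::nat. if i < n - 1 then {i+1, n} else {1,2::nat})"
  define L where "L = (\<lambda>i::nat. if i < n - 1 then {} else insert {2,3} ((\<lambda>x. {1,x}) ` {3..n-1}))"
  have LL: "L (n-1) = insert {2,3} ((\<lambda>x. {1,x}) ` {3..n-1})" unfolding L_def by simp
  have cc: "c (n-1) = {1,2}" unfolding c_def by simp
  have ports_lo: "ports c L i = {{i+1,n}}" if "i < n - 1" for i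
    using that unfolding ports_def c_def L_def by auto
  have ports_hi: "ports c L (n-1) = L (n-1)" unfolding ports_def LL by auto
  have nohi: "n \<notin> A" if "A \<in> insert (c (n-1)) (L (n-1))" for A
    using that assms unfolding cc LL by auto
  have cross: "\<exists>u\<in>ports c L i. \<exists>v\<in>ports c L (n-1). KC_E u v" if "i < n - 1" for i
  proof -
    have "\<exists>v\<in>L (n-1). i+1 \<in> v"
    proof (cases "i = 0")
      case True
      then show ?thesis using assms unfolding LL by (intro bexI[of _ "{1,3}"]) auto
    next
      case False
      show ?thesis
      proof (cases "i = 1")
        case True then show ?thesis unfolding LL by auto
      next
        case False
        then show ?thesis using `i \<noteq> 0` that unfolding LL by (intro bexI[of _ "{1,i+1}"]) auto
      qed
    qed
    then obtain v where v: "v \<in> L (n-1)" "i+1 \<in> v" by blast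
    have "v \<noteq> {i+1,n}" using nohi v by auto
    then have "KC_E {i+1,n} v" using v unfolding KC_E_def by auto
    then show ?thesis using v ports_lo[OF that] ports_hi by auto
  qed
  show ?thesis unfolding strongly_1_shallow_minor_def
  proof (intro exI[of _ c] exI[of _ L] conjI allI impI)
    fix i assume i: "i < n"
    show "c i \<in> KC_V n 2"
    proof (cases "i < n - 1")
      case True
      then have "c i = {i+1,n}" "i + 1 \<noteq> n" "i + 1 \<le> n" unfolding c_def by auto
      then show ?thesis unfolding KC_V_def by auto
    next
      case False
      then have "c i = {1,2}" unfolding c_def by auto
      then show ?thesis using assms unfolding KC_V_def by auto
    qed
    show "L i \<subseteq> KC_V n 2"
    proof (cases "i < n - 1")
      case True
      then show ?thesis unfolding L_def by simp
    next
      case False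
      then have Li: "L i = insert {2,3} ((\<lambda>x. {1,x}) ` {3..n-1})" unfolding L_def by auto
      have "{1,x} \<in> KC_V n 2" if "x \<in> {3..n-1}" for x
        using that unfolding KC_V_def by auto
      moreover have "{2,3} \<in> KC_V n 2" using assms unfolding KC_V_def by auto
      ultimately show ?thesis unfolding Li by blast
    qed
    show "c i \<notin> L i"
    proof (cases "i < n - 1")
      case True
      then show ?thesis unfolding L_def by simp
    next
      case False
      then have Li: "L i = insert {2,3} ((\<lambda>x. {1,x}) ` {3..n-1})" and ci: "c i = {1,2}"
        unfolding L_def c_def by auto
      have "{1,2} \<noteq> {1,x}" if "x \<in> {3..n-1}" for x::nat
        using that by (auto simp: doubleton_eq_iff)
      moreover have "{1,2} \<noteq> {2,3::nat}" by (auto simp: doubleton_eq_iff)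
      ultimately show ?thesis unfolding Li ci by blast
    qed
    show "\<forall>l\<in>L i. KC_E (c i) l"
    proof (cases "i < n - 1")
      case True
      then show ?thesis unfolding L_def by simp
    next
      case False
      then have Li: "L i = insert {2,3} ((\<lambda>x. {1,x}) ` {3..n-1})" and ci: "c i = {1,2}"
        unfolding L_def c_def by auto
      have "KC_E {1,2} {1,x}" if "x \<in> {3..n-1}" for x::nat
        using that unfolding KC_E_def by (auto simp: doubleton_eq_iff)
      moreover have "KC_E {1,2} {2,3::nat}" unfolding KC_E_def by (auto simp: doubleton_eq_iff)
      ultimately show ?thesis unfolding Li ci by blast
    qed
  next
    fix i j assume ij: "i < n" "j < n" "i \<noteq> j"
    show "insert (c i) (L i) \<inter> insert (c j) (L j) = {}"
    proof (cases "i < n - 1 \<and> j < n - 1")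
      case True
      then show ?thesis using ij unfolding c_def L_def by (auto simp: doubleton_eq_iff)
    next
      case False
      then have "(i < n - 1 \<and> j = n - 1) \<or> (j < n - 1 \<and> i = n - 1)" using ij by auto
      then show ?thesis
      proof
        assume h: "i < n - 1 \<and> j = n - 1"
        then have "insert (c i) (L i) = {{i+1,n}}" unfolding c_def L_def by auto
        then show ?thesis using nohi h by auto
      next
        assume h: "j < n - 1 \<and> i = n - 1"
        then have "insert (c j) (L j) = {{j+1,n}}" unfolding c_def L_def by auto
        then show ?thesis using nohi h by auto
      qed
    qed
  next
    fix i j assume ij: "i < n" "j < n" "i \<noteq> j"
    have symE: "KC_E u v \<Longrightarrow> KC_E v u" for u v unfolding KC_E_def by auto
    show "\<exists>u\<in>ports c L i. \<exists>v\<in>ports c L j. KC_E u v"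
    proof (cases "i < n - 1 \<and> j < n - 1")
      case True
      then show ?thesis using ij ports_lo unfolding KC_E_def by (auto simp: doubleton_eq_iff)
    next
      case False
      then have "(i < n - 1 \<and> j = n - 1) \<or> (j < n - 1 \<and> i = n - 1)" using ij by auto
      then show ?thesis using cross symE by blast
    qed
  qed
qed

theorem lemma2p3:
  fixes n :: nat
  assumes "n \<ge> 4"
  shows "chromatic_number (KC_V n 2) KC_E \<le> h_o (KC_V n 2) KC_E \<and>
         (let t = (if even n then n - 1 else n) in
            t = chromatic_number (KC_V n 2) KC_E \<and>
            strongly_1_shallow_minor (KC_V n 2) KC_E t)"
proof -
  define t where "t = (if even n then n - 1 else n)"
  have pc: "proper_colouring (KC_V n 2) KC_E t (col n)"
    unfolding t_def by (rule col_proper[OF assms])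
  have chi: "chromatic_number (KC_V n 2) KC_E = t"
    unfolding chromatic_number_def
  proof (rule Least_equality)
    show "\<exists>c. proper_colouring (KC_V n 2) KC_E t c" using pc by blast
  next
    fix k assume "\<exists>c. proper_colouring (KC_V n 2) KC_E k c"
    then obtain c where "proper_colouring (KC_V n 2) KC_E k c" by blast
    then show "t \<le> k" unfolding t_def by (rule colour_lower2[OF _ assms])
  qed
  have "t \<le> n" unfolding t_def by simp
  then have sh: "strongly_1_shallow_minor (KC_V n 2) KC_E t"
    by (rule shallow_mono[OF KC_shallow[OF assms]])
  have symE: "\<And>u v. KC_E u v \<Longrightarrow> KC_E v u" unfolding KC_E_def by auto
  have "t \<le> h_o (KC_V n 2) KC_E" by (rule h_o_ge[OF finite_KC sh symE])
  then show ?thesis using chi sh unfolding t_def Let_def by simp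
qed

end
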